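(* Let $T>0$ and let $a_0,b_0,\psi_0,\rho\in\mathbb{R}$ satisfy $a_0,b_0,\psi_0\ge0$ and $\rho>a_0^2+2b_0+2\psi_0/T$. Let $\psi:[0,T]\to[0,+\infty)$ be absolutely continuous with $\psi(0)=\psi_0$ and $$\psi'+\rho\le a_0\rho^{1/2}+b_0\quad\text{a.e. in the set }P:=\{t\in(0,T):\psi(t)>0\}.$$ Then: (i) if $\psi_0=0$, then $\psi$ vanishes identically; (ii) if $\psi_0>0$, there exists $T^*\in(0,T)$ with $T^*\le 2\psi_0/(\rho-a_0^2-2b_0)$ such that $\psi$ is strictly decreasing in $(0,T^* )$ and $\psi$ vanishes in $[T^*,T]$. *)

theory Defs
  imports "HOL-Analysis.Analysis"
begin

definition abs_continuous_on :: "real \<Rightarrow> real \<Rightarrow> (real \<Rightarrow> real) \<Rightarrow> bool" where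
  "abs_continuous_on lo hi f \<longleftrightarrow>
     (\<forall>\<epsilon>>0. \<exists>\<delta>>0. \<forall>(n::nat) (a::nat \<Rightarrow> real) (b::nat \<Rightarrow> real).
        (\<forall>k<n. lo \<le> a k \<and> a k \<le> b k \<and> b k \<le> hi) \<longrightarrow>
        (\<forall>i<n. \<forall>j<n. i \<noteq> j \<longrightarrow> b i \<le> a j \<or> b j \<le> a i) \<longrightarrow>
        (\<Sum>k<n. b k - a k) < \<delta> \<longrightarrow>
        (\<Sum>k<n. \<bar>f (b k) - f (a k)\<bar>) < \<epsilon>)"

end

theory Submission
  imports Defs
begin

lemma nonoverlap_real:
  fixes u1 v1 u2 v2 :: real
  assumes "u1 < v1" "u2 < v2" "interior {u1..v1} \<inter> interior {u2..v2} = {}"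
  shows "v1 \<le> u2 \<or> v2 \<le> u1"
proof (rule ccontr)
  assume nt: "\<not> (v1 \<le> u2 \<or> v2 \<le> u1)"
  define m where "m = (max u1 u2 + min v1 v2) / 2"
  have "m \<in> {u1<..<v1} \<inter> {u2<..<v2}"
    using assms nt unfolding m_def by auto
  then show False using assms unfolding m_def by (auto simp: max_def min_def split: if_splits)
qed

lemma deriv_bound_local:
  fixes f :: "real \<Rightarrow> real"
  assumes "f differentiable at x" "\<epsilon> > 0"
  shows "\<exists>d>0. (\<forall>y. x \<le> y \<and> y < x + d \<longrightarrow> f y - f x \<le> (deriv f x + \<epsilon>) * (y - x)) \<and>
               (\<forall>y. x - d < y \<and> y \<le> x \<longrightarrow> f x - f y \<le> (deriv f x + \<epsilon>) * (x - y))"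
proof -
  let ?D = "deriv f x"
  have "(f has_real_derivative ?D) (at x)"
    using assms(1) by (simp add: DERIV_deriv_iff_real_differentiable)
  then have "((\<lambda>y. (f y - f x) / (y - x)) \<longlongrightarrow> ?D) (at x)"
    by (simp add: has_field_derivative_iff)
  then have "\<forall>\<^sub>F y in at x. dist ((f y - f x) / (y - x)) ?D < \<epsilon>"
    using assms(2) by (rule tendstoD)
  then obtain d where d: "d > 0" and dd: "\<And>y. y \<noteq> x \<Longrightarrow> dist y x < d \<Longrightarrow> dist ((f y - f x) / (y - x)) ?D < \<epsilon>"
    unfolding eventually_at by blast
  have q: "(f y - f x) / (y - x) < ?D + \<epsilon>" if "y \<noteq> x" "\<bar>y - x\<bar> < d" for y
    using dd[OF that(1)] that(2) by (auto simp: dist_real_def)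
  show ?thesis
  proof (intro exI[of _ d] conjI allI impI d)
    fix y assume y: "x \<le> y \<and> y < x + d"
    show "f y - f x \<le> (?D + \<epsilon>) * (y - x)"
    proof (cases "y = x")
      case False
      then have "y > x" using y by auto
      have "(f y - f x) / (y - x) < ?D + \<epsilon>" using q[OF False] y by auto
      then show ?thesis using \<open>y > x\<close> by (simp add: pos_divide_less_eq)
    qed simp
  next
    fix y assume y: "x - d < y \<and> y \<le> x"
    show "f x - f y \<le> (?D + \<epsilon>) * (x - y)"
    proof (cases "y = x")
      case False
      then have "y < x" using y by auto
      have "(f y - f x) / (y - x) < ?D + \<epsilon>" using q[OF False] y by auto
      moreover have "(f y - f x) / (y - x) = (f x - f y) / (x - y)"
        by (metis minus_diff_eq minus_divide_divide)
      ultimately have "(f x - f y) / (x - y) < ?D + \<epsilon>" by simp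
      then show ?thesis using \<open>y < x\<close> by (simp add: pos_divide_less_eq)
    qed simp
  qed
qed

lemma growth_eps:
  fixes f :: "real \<Rightarrow> real"
  assumes st: "s \<le> t" and lo: "lo \<le> s" and hi: "t \<le> hi"
    and ac: "abs_continuous_on lo hi f"
    and N: "negligible N"
    and k: "k \<ge> 0"
    and der: "\<And>x. x \<in> {s<..<t} \<Longrightarrow> x \<notin> N \<Longrightarrow> f differentiable at x \<and> deriv f x \<le> -k"
    and \<epsilon>: "\<epsilon> > 0"
  shows "f t - f s \<le> -k*(t-s) + \<epsilon> * (k + (t - s) + 1)"
proof -
  obtain \<delta>1 where \<delta>1: "\<delta>1 > 0" and ac\<delta>: "\<forall>(n::nat) (a::nat\<Rightarrow>real) b. (\<forall>k<n. lo \<le> a k \<and> a k \<le> b k \<and> b k \<le> hi) \<longrightarrow>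
        (\<forall>i<n. \<forall>j<n. i \<noteq> j \<longrightarrow> b i \<le> a j \<or> b j \<le> a i) \<longrightarrow>
        (\<Sum>k<n. b k - a k) < \<delta>1 \<longrightarrow> (\<Sum>k<n. \<bar>f (b k) - f (a k)\<bar>) < \<epsilon>"
    using ac \<epsilon> unfolding abs_continuous_on_def by blast
  define \<delta> where "\<delta> = min \<delta>1 \<epsilon>"
  have \<delta>pos: "\<delta> > 0" using \<delta>1 \<epsilon> by (simp add: \<delta>_def)
  define B where "B = N \<union> {s,t}"
  have negB: "negligible B" using N by (simp add: B_def negligible_Un negligible_finite)
  then have Bnull: "B \<in> null_sets lebesgue" by (simp add: negligible_iff_null_sets)
  then have Bsets: "B \<in> sets lebesgue" by auto
  obtain U where U: "open U" "B \<subseteq> U" "(U - B) \<in> lmeasurable" "emeasure lebesgue (U - B) < ennreal \<delta>"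
    using sets_lebesgue_outer_open[OF Bsets \<delta>pos] by blast
  have mUB: "measure lebesgue (U - B) < \<delta>"
    using U(3,4) \<delta>pos by (metis emeasure_eq_measure2 ennreal_leI linorder_not_le)
  have Blm: "B \<in> lmeasurable" using Bnull by (simp add: fmeasurableI_null_sets)
  have Ueq: "U = (U - B) \<union> B" using U(2) by auto
  have Ulm: "U \<in> lmeasurable" using U(3) Blm by (metis Ueq fmeasurable.Un)
  have mU: "measure lebesgue U < \<delta>"
    using mUB measure_Diff_null_set[OF _ Bnull, of U] Ulm by (simp add: fmeasurable_def)
  have good: "\<forall>x\<in>{s..t} - B. \<exists>d. d > 0 \<and> (\<forall>y. x \<le> y \<and> y < x + d \<longrightarrow> f y - f x \<le> (deriv f x + \<epsilon>) * (y - x)) \<and>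
               (\<forall>y. x - d < y \<and> y \<le> x \<longrightarrow> f x - f y \<le> (deriv f x + \<epsilon>) * (x - y))"
  proof
    fix x assume "x \<in> {s..t} - B"
    then have "x \<in> {s<..<t}" "x \<notin> N" by (auto simp: B_def)
    then have "f differentiable at x" using der by blast
    from deriv_bound_local[OF this \<epsilon>]
    show "\<exists>d. d > 0 \<and> (\<forall>y. x \<le> y \<and> y < x + d \<longrightarrow> f y - f x \<le> (deriv f x + \<epsilon>) * (y - x)) \<and>
               (\<forall>y. x - d < y \<and> y \<le> x \<longrightarrow> f x - f y \<le> (deriv f x + \<epsilon>) * (x - y))" by blast
  qed
  obtain d where d0: "\<forall>x\<in>{s..t} - B. d x > 0 \<and> (\<forall>y. x \<le> y \<and> y < x + d x \<longrightarrow> f y - f x \<le> (deriv f x + \<epsilon>) * (y - x)) \<and>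
               (\<forall>y. x - d x < y \<and> y \<le> x \<longrightarrow> f x - f y \<le> (deriv f x + \<epsilon>) * (x - y))"
    using bchoice[OF good] by blast
  note d = d0[rule_format]
  have bad: "\<forall>x\<in>B. \<exists>r. r > 0 \<and> ball x r \<subseteq> U"
    using U(1,2) openE by blast
  obtain r where r0: "\<forall>x\<in>B. r x > 0 \<and> ball x (r x) \<subseteq> U"
    using bchoice[OF bad] by blast
  note r = r0[rule_format]
  define g where "g x = (if x \<in> B then r x else if x \<in> {s..t} then d x else 1)" for x
  have gpos: "g x > 0" for x
  proof -
    have "x \<in> B \<Longrightarrow> r x > 0" using r by blast
    moreover have "x \<notin> B \<Longrightarrow> x \<in> {s..t} \<Longrightarrow> d x > 0" using d by blast
    ultimately show ?thesis by (auto simp: g_def)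
  qed
  have gauge: "gauge (\<lambda>x. ball x (g x))" using gpos gauge_ball_dependent by blast
  obtain p where p: "p tagged_division_of {s..t}" and fine: "(\<lambda>x. ball x (g x)) fine p"
    using fine_division_exists[OF gauge, of s t] by auto
  have pfin: "finite p" using tagged_division_ofD(1)[OF p] .
  have pK: "\<exists>u v. K = {u..v} \<and> u \<le> v \<and> s \<le> u \<and> v \<le> t \<and> u \<le> x \<and> x \<le> v" if xKp: "(x,K) \<in> p" for x K
  proof -
    have xK: "x \<in> K" using tagged_division_ofD(2)[OF p xKp] .
    have Ks: "K \<subseteq> {s..t}" using tagged_division_ofD(3)[OF p xKp] .
    obtain u v where K: "K = cbox u v" using tagged_division_ofD(4)[OF p xKp] by blast
    then have K': "K = {u..v}" by simp
    then show ?thesis using xK Ks by (intro exI[of _ u] exI[of _ v]) auto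
  qed
  have finep: "K \<subseteq> ball x (g x)" if "(x,K) \<in> p" for x K
    using fine that unfolding fine_def by blast
  define len where "len z = Sup (snd z) - Inf (snd z)" for z :: "real \<times> real set"
  define F where "F z = f (Sup (snd z)) - f (Inf (snd z))" for z :: "real \<times> real set"
  define P1 where "P1 z = (fst z \<notin> B)" for z :: "real \<times> real set"
  define P2 where "P2 z = (fst z \<in> B \<and> Inf (snd z) < Sup (snd z))" for z :: "real \<times> real set"
  have pK2: "\<exists>u v. snd z = {u..v} \<and> u \<le> v \<and> s \<le> u \<and> v \<le> t \<and> u \<le> fst z \<and> fst z \<le> v
       \<and> Inf (snd z) = u \<and> Sup (snd z) = v" if zp0: "z \<in> p" for z
  proof -
    obtain x K where z: "z = (x,K)" by (cases z)
    obtain u v where "K = {u..v} \<and> u \<le> v \<and> s \<le> u \<and> v \<le> t \<and> u \<le> x \<and> x \<le> v"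
      using pK zp0 z by blast
    then show ?thesis using z by auto
  qed
  have sumF: "sum F p = f t - f s"
    using additive_tagged_division_1[OF st p, of f] by (simp add: F_def case_prod_beta')
  have sumL: "sum len p = t - s"
    using additive_tagged_division_1[OF st p, of "\<lambda>x. x"] by (simp add: len_def case_prod_beta')
  have lennn: "len z \<ge> 0" if "z \<in> p" for z using pK2[OF that] by (auto simp: len_def)
  have ptw_len: "len z = (if P1 z then len z else 0) + (if P2 z then len z else 0)" if "z \<in> p" for z
    using pK2[OF that] by (auto simp: len_def P1_def P2_def)
  have ptw_F: "F z \<le> (if P1 z then (-k+\<epsilon>) * len z else 0) + (if P2 z then \<bar>F z\<bar> else 0)" if zp: "z \<in> p" for z
  proof (cases "P1 z")
    case True
    obtain u v where uv: "snd z = {u..v}" "u \<le> v" "s \<le> u" "v \<le> t" "u \<le> fst z" "fst z \<le> v"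
       "Inf (snd z) = u" "Sup (snd z) = v" using pK2[OF zp] by blast
    let ?x = "fst z"
    have xg: "?x \<in> {s..t} - B" using True uv by (auto simp: P1_def)
    have gx: "g ?x = d ?x" using xg by (simp add: g_def)
    have "(fst z, snd z) \<in> p" using zp by simp
    then have "snd z \<subseteq> ball ?x (g ?x)" by (rule finep)
    then have sub: "{u..v} \<subseteq> ball ?x (d ?x)" using uv gx by simp
    have "v \<in> {u..v}" "u \<in> {u..v}" using uv(2) by auto
    then have "v \<in> ball ?x (d ?x)" "u \<in> ball ?x (d ?x)" using sub by blast+
    then have v1: "v < ?x + d ?x" and u1: "?x - d ?x < u" by (auto simp: dist_real_def)
    have "?x \<in> {s<..<t}" "?x \<notin> N" using xg by (auto simp: B_def)
    then have Dk: "deriv f ?x \<le> -k" using der by blast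
    have e1: "f v - f ?x \<le> (deriv f ?x + \<epsilon>) * (v - ?x)" using d[OF xg] v1 uv by blast
    have e2: "f ?x - f u \<le> (deriv f ?x + \<epsilon>) * (?x - u)" using d[OF xg] u1 uv by blast
    have Fz: "F z = f v - f u" using uv by (simp add: F_def)
    have ex: "(deriv f ?x + \<epsilon>) * (v - ?x) + (deriv f ?x + \<epsilon>) * (?x - u) = (deriv f ?x + \<epsilon>) * (v - u)"
      by (simp add: algebra_simps)
    have "F z \<le> (deriv f ?x + \<epsilon>) * (v - u)" using e1 e2 Fz ex by linarith
    also have "\<dots> \<le> (-k + \<epsilon>) * (v - u)" using Dk uv by (intro mult_right_mono) auto
    finally show ?thesis using True uv by (simp add: len_def P2_def P1_def)
  next
    case False
    obtain u v where uv: "Inf (snd z) = u" "Sup (snd z) = v" "u \<le> v" using pK2[OF zp] by blast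
    show ?thesis
    proof (cases "P2 z")
      case True
      then show ?thesis using False by simp
    next
      case F2: False
      then have "\<not> u < v" using False uv by (simp add: P1_def P2_def)
      then have "u = v" using uv by simp
      then have "F z = 0" using uv by (simp add: F_def)
      then show ?thesis using False F2 by simp
    qed
  qed
  define p2 where "p2 = {z\<in>p. P2 z}"
  have p2fin: "finite p2" using pfin by (simp add: p2_def)
  define S1 where "S1 = sum len {z\<in>p. P1 z}"
  define S2 where "S2 = sum len p2"
  define G where "G = sum (\<lambda>z. \<bar>F z\<bar>) p2"
  have L: "S1 + S2 = t - s"
  proof -
    have "sum len p = sum (\<lambda>z. (if P1 z then len z else 0) + (if P2 z then len z else 0)) p"
      using ptw_len by (rule sum.cong[OF refl])
    also have "\<dots> = S1 + S2"
      by (simp add: sum.distrib sum.inter_filter[OF pfin] S1_def S2_def p2_def)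
    finally show ?thesis using sumL by simp
  qed
  have FS: "f t - f s \<le> (-k + \<epsilon>) * S1 + G"
  proof -
    have "sum F p \<le> sum (\<lambda>z. (if P1 z then (-k+\<epsilon>) * len z else 0) + (if P2 z then \<bar>F z\<bar> else 0)) p"
      using ptw_F by (rule sum_mono)
    also have "\<dots> = (-k + \<epsilon>) * S1 + G"
    proof -
      have A1: "(\<Sum>z\<in>p. if P1 z then (-k+\<epsilon>) * len z else 0) = (-k+\<epsilon>) * S1"
        unfolding S1_def sum.inter_filter[OF pfin] sum_distrib_left by (rule sum.cong) auto
      have A2: "(\<Sum>z\<in>p. if P2 z then \<bar>F z\<bar> else 0) = G"
        unfolding G_def p2_def sum.inter_filter[OF pfin] by simp
      show ?thesis by (simp only: sum.distrib A1 A2)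
    qed
    finally show ?thesis using sumF by simp
  qed
  have S1nn: "S1 \<ge> 0" unfolding S1_def using lennn by (intro sum_nonneg) auto
  have S2nn: "S2 \<ge> 0" unfolding S2_def p2_def using lennn by (intro sum_nonneg) auto
  have novl: "Sup (snd z1) \<le> Inf (snd z2) \<or> Sup (snd z2) \<le> Inf (snd z1)"
    if "z1 \<in> p2" "z2 \<in> p2" "z1 \<noteq> z2" for z1 z2
  proof -
    have z1p: "z1 \<in> p" "P2 z1" and z2p: "z2 \<in> p" "P2 z2" using that by (auto simp: p2_def)
    obtain u1 v1 where uv1: "snd z1 = {u1..v1}" "Inf (snd z1) = u1" "Sup (snd z1) = v1"
      using pK2[OF z1p(1)] by blast
    obtain u2 v2 where uv2: "snd z2 = {u2..v2}" "Inf (snd z2) = u2" "Sup (snd z2) = v2"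
      using pK2[OF z2p(1)] by blast
    have "interior (snd z1) \<inter> interior (snd z2) = {}"
      using tagged_division_ofD(5)[OF p, of "fst z1" "snd z1" "fst z2" "snd z2"] z1p z2p that(3)
      by (simp add: prod_eq_iff)
    then have "v1 \<le> u2 \<or> v2 \<le> u1"
      using nonoverlap_real[of u1 v1 u2 v2] uv1 uv2 z1p(2) z2p(2) by (auto simp: P2_def)
    then show ?thesis using uv1 uv2 by auto
  qed
  have S2\<delta>: "S2 < \<delta>"
  proof -
    have meas: "len z = measure lebesgue (snd z)" if zp2: "z \<in> p2" for z
    proof -
      have "z \<in> p" using zp2 by (simp add: p2_def)
      then obtain u v where uv: "snd z = {u..v}" "Inf (snd z) = u" "Sup (snd z) = v" "u \<le> v"
        using pK2 by blast
      then show ?thesis by (simp add: len_def)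
    qed
    have pw: "pairwise (\<lambda>z1 z2. negligible (snd z1 \<inter> snd z2)) p2"
      unfolding pairwise_def
    proof (intro ballI impI)
      fix z1 z2 assume z: "z1 \<in> p2" "z2 \<in> p2" "z1 \<noteq> z2"
      have z1p: "z1 \<in> p" and z2p: "z2 \<in> p" using z by (auto simp: p2_def)
      obtain u1 v1 where uv1: "snd z1 = {u1..v1}" "Inf (snd z1) = u1" "Sup (snd z1) = v1"
        using pK2[OF z1p] by blast
      obtain u2 v2 where uv2: "snd z2 = {u2..v2}" "Inf (snd z2) = u2" "Sup (snd z2) = v2"
        using pK2[OF z2p] by blast
      have "snd z1 \<inter> snd z2 \<subseteq> {v1, v2}" using novl[OF z] uv1 uv2 by auto
      then show "negligible (snd z1 \<inter> snd z2)"
        by (meson finite.emptyI finite_insert negligible_finite negligible_subset)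
    qed
    have lmz: "snd z \<in> lmeasurable" if zp2: "z \<in> p2" for z
    proof -
      have "z \<in> p" using zp2 by (simp add: p2_def)
      then obtain u v where "snd z = {u..v}" using pK2 by blast
      then show ?thesis by simp
    qed
    have "S2 = (\<Sum>z\<in>p2. measure lebesgue (snd z))" unfolding S2_def using meas by simp
    also have "\<dots> = measure lebesgue (\<Union>(snd ` p2))"
      using measure_negligible_finite_Union_image[OF p2fin lmz pw] by simp
    also have "\<dots> \<le> measure lebesgue U"
    proof (rule measure_mono_fmeasurable)
      show "\<Union>(snd ` p2) \<subseteq> U"
      proof
        fix y assume "y \<in> \<Union>(snd ` p2)"
        then obtain z where z: "z \<in> p2" "y \<in> snd z" by auto
        then have zp: "z \<in> p" and xB: "fst z \<in> B" by (auto simp: p2_def P2_def)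
        have "snd z \<subseteq> ball (fst z) (r (fst z))"
          using finep[of "fst z" "snd z"] zp xB by (simp add: g_def prod.collapse)
        then show "y \<in> U" using r[OF xB] z by auto
      qed
      show "\<Union>(snd ` p2) \<in> sets lebesgue"
        using lmz p2fin by (intro sets.finite_UN) auto
      show "U \<in> fmeasurable lebesgue" using Ulm .
    qed
    finally show ?thesis using mU by simp
  qed
  have G\<epsilon>: "G < \<epsilon>"
  proof -
    obtain h where h: "bij_betw h {0..<card p2} p2" using ex_bij_betw_nat_finite[OF p2fin] by blast
    define n where "n = card p2"
    define a where "a i = Inf (snd (h i))" for i
    define b where "b i = Sup (snd (h i))" for i
    have hip2: "h i \<in> p2" if "i < n" for i using h that by (auto simp: n_def bij_betw_def)
    have c1: "\<forall>i<n. lo \<le> a i \<and> a i \<le> b i \<and> b i \<le> hi"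
    proof (intro allI impI)
      fix i assume "i < n"
      then have "h i \<in> p" using hip2 by (auto simp: p2_def)
      then show "lo \<le> a i \<and> a i \<le> b i \<and> b i \<le> hi"
        using pK2[of "h i"] lo hi by (auto simp: a_def b_def)
    qed
    have c2: "\<forall>i<n. \<forall>j<n. i \<noteq> j \<longrightarrow> b i \<le> a j \<or> b j \<le> a i"
    proof (intro allI impI)
      fix i j assume ij: "i < n" "j < n" "i \<noteq> j"
      then have "h i \<noteq> h j" using h by (auto simp: n_def bij_betw_def inj_on_def)
      then show "b i \<le> a j \<or> b j \<le> a i" using novl[OF hip2 hip2] ij by (auto simp: a_def b_def)
    qed
    have eq1: "(\<Sum>i<n. b i - a i) = S2"
      unfolding S2_def n_def lessThan_atLeast0 a_def b_def
      using sum.reindex_bij_betw[OF h, of len] by (simp add: len_def)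
    have eq2: "(\<Sum>i<n. \<bar>f (b i) - f (a i)\<bar>) = G"
      unfolding G_def n_def lessThan_atLeast0 a_def b_def
      using sum.reindex_bij_betw[OF h, of "\<lambda>z. \<bar>F z\<bar>"] by (simp add: F_def)
    have "(\<Sum>i<n. b i - a i) < \<delta>1" using eq1 S2\<delta> by (simp add: \<delta>_def)
    then have "(\<Sum>i<n. \<bar>f (b i) - f (a i)\<bar>) < \<epsilon>" using ac\<delta> c1 c2 by blast
    then show ?thesis using eq2 by simp
  qed
  have "S2 \<le> \<epsilon>" using S2\<delta> by (simp add: \<delta>_def)
  then have m1: "k * S2 \<le> k * \<epsilon>" using k by (intro mult_left_mono) auto
  have m2: "\<epsilon> * S1 \<le> \<epsilon> * (t - s)" using L S2nn \<epsilon> by (intro mult_left_mono) auto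
  have FS': "f t - f s \<le> - (k * S1) + \<epsilon> * S1 + G" using FS by (simp add: algebra_simps)
  have "S1 = (t - s) - S2" using L by simp
  then have kS1: "k * S1 = k * (t - s) - k * S2" by (simp add: right_diff_distrib)
  have r: "-k*(t-s) + \<epsilon> * (k + (t - s) + 1) = - (k * (t - s)) + k * \<epsilon> + \<epsilon> * (t - s) + \<epsilon>"
    by (simp add: algebra_simps)
  show ?thesis unfolding r using FS' kS1 m1 m2 G\<epsilon> by linarith
qed


lemma growth:
  fixes f :: "real \<Rightarrow> real"
  assumes st: "s \<le> t" and lo: "lo \<le> s" and hi: "t \<le> hi"
    and ac: "abs_continuous_on lo hi f"
    and N: "negligible N"
    and k: "k \<ge> 0"
    and der: "\<And>x. x \<in> {s<..<t} \<Longrightarrow> x \<notin> N \<Longrightarrow> f differentiable at x \<and> deriv f x \<le> -k"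
  shows "f t - f s \<le> -k*(t-s)"
proof (rule field_le_epsilon)
  fix e :: real assume e: "e > 0"
  define C where "C = k + (t - s) + 1"
  have C: "C > 0" using k st by (simp add: C_def)
  have eC: "e / C > 0" using e C by simp
  have "f t - f s \<le> -k*(t-s) + (e / C) * (k + (t - s) + 1)"
    using growth_eps[OF st lo hi ac N k der eC] .
  also have "(e / C) * (k + (t - s) + 1) = e" using C by (simp add: C_def[symmetric])
  finally show "f t - f s \<le> -k*(t-s) + e" .
qed

lemma ac_cont:
  assumes ac: "abs_continuous_on lo hi f"
  shows "continuous_on {lo..hi} f"
  unfolding continuous_on_iff
proof (intro ballI allI impI)
  fix x e :: real assume x: "x \<in> {lo..hi}" and e: "e > 0"
  obtain \<delta> where \<delta>: "\<delta> > 0" and ac\<delta>: "\<forall>(n::nat) (a::nat\<Rightarrow>real) b. (\<forall>k<n. lo \<le> a k \<and> a k \<le> b k \<and> b k \<le> hi) \<longrightarrow>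
        (\<forall>i<n. \<forall>j<n. i \<noteq> j \<longrightarrow> b i \<le> a j \<or> b j \<le> a i) \<longrightarrow>
        (\<Sum>k<n. b k - a k) < \<delta> \<longrightarrow> (\<Sum>k<n. \<bar>f (b k) - f (a k)\<bar>) < e"
    using ac e unfolding abs_continuous_on_def by blast
  show "\<exists>d>0. \<forall>x'\<in>{lo..hi}. dist x' x < d \<longrightarrow> dist (f x') (f x) < e"
  proof (intro exI[of _ \<delta>] conjI ballI impI \<delta>)
    fix x' assume x': "x' \<in> {lo..hi}" and dx: "dist x' x < \<delta>"
    have "(\<Sum>k<(1::nat). \<bar>f ((\<lambda>_. max x x') k) - f ((\<lambda>_. min x x') k)\<bar>) < e"
      using x x' dx by (intro ac\<delta>[rule_format]) (auto simp: dist_real_def)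
    then show "dist (f x') (f x) < e"
      by (cases "x \<le> x'") (auto simp: dist_real_def max_def min_def abs_minus_commute)
  qed
qed

theorem lemma4p1:
  fixes T a0 b0 \<psi>0 \<rho> :: real and \<psi> :: "real \<Rightarrow> real"
  assumes T_pos: "T > 0"
    and a0: "a0 \<ge> 0" and b0: "b0 \<ge> 0" and psi0: "\<psi>0 \<ge> 0"
    and rho: "\<rho> > a0^2 + 2 * b0 + 2 * \<psi>0 / T"
    and nonneg: "\<forall>t\<in>{0..T}. \<psi> t \<ge> 0"
    and ac: "abs_continuous_on 0 T \<psi>"
    and init: "\<psi> 0 = \<psi>0"
    and ineq: "AE t in lebesgue. t \<in> {t\<in>{0<..<T}. \<psi> t > 0} \<longrightarrow>
                 (\<psi> differentiable at t \<and> deriv \<psi> t + \<rho> \<le> a0 * sqrt \<rho> + b0)"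
  shows "(\<psi>0 = 0 \<longrightarrow> (\<forall>t\<in>{0..T}. \<psi> t = 0)) \<and>
         (\<psi>0 > 0 \<longrightarrow> (\<exists>Ts. 0 < Ts \<and> Ts < T \<and> Ts \<le> 2 * \<psi>0 / (\<rho> - a0^2 - 2 * b0) \<and>
              (\<forall>s t. 0 < s \<and> s < t \<and> t < Ts \<longrightarrow> \<psi> t < \<psi> s) \<and>
              (\<forall>t\<in>{Ts..T}. \<psi> t = 0)))"
proof -
  define \<kappa> where "\<kappa> = (\<rho> - a0^2 - 2 * b0) / 2"
  have q0: "\<psi>0 / T \<ge> 0" using psi0 T_pos by simp
  have k2: "2 * \<kappa> = \<rho> - a0^2 - 2 * b0" by (simp add: \<kappa>_def)
  have "2 * \<psi>0 / T = 2 * (\<psi>0 / T)" by simp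
  then have \<kappa>T: "\<kappa> > \<psi>0 / T" using rho k2 by linarith
  have \<kappa>pos: "\<kappa> > 0" using \<kappa>T q0 by linarith
  have \<kappa>T2: "\<kappa> * T > \<psi>0" using \<kappa>T T_pos by (simp add: pos_divide_less_eq)
  have "a0^2 \<ge> 0" by simp
  then have rpos: "\<rho> > 0" using rho b0 q0 \<open>2 * \<psi>0 / T = 2 * (\<psi>0 / T)\<close> by linarith
  have sq: "sqrt \<rho> ^ 2 = \<rho>" using rpos by simp
  have "0 \<le> (a0 - sqrt \<rho>)^2" by simp
  then have am: "2 * (a0 * sqrt \<rho>) \<le> a0^2 + \<rho>" using sq by (simp add: power2_diff)
  have dbound: "a0 * sqrt \<rho> + b0 - \<rho> \<le> - \<kappa>" using am k2 by linarith
  obtain N where N1: "{x \<in> space lebesgue. \<not> (x \<in> {t\<in>{0<..<T}. \<psi> t > 0} \<longrightarrow>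
                 (\<psi> differentiable at x \<and> deriv \<psi> x + \<rho> \<le> a0 * sqrt \<rho> + b0))} \<subseteq> N"
     and N2: "N \<in> null_sets lebesgue"
    using ineq by (elim AE_E) (blast intro: null_setsI)
  have negN: "negligible N" using N2 by (simp add: negligible_iff_null_sets)
  have cont: "continuous_on {0..T} \<psi>" using ac by (rule ac_cont)
  have key: "\<psi> t - \<psi> s \<le> -\<kappa> * (t - s)"
    if "0 \<le> s" "s \<le> t" "t \<le> T" "\<forall>x\<in>{s<..<t}. \<psi> x > 0" for s t
  proof (rule growth[OF that(2) that(1) that(3) ac negN])
    show "0 \<le> \<kappa>" using \<kappa>pos by simp
    fix x assume x: "x \<in> {s<..<t}" "x \<notin> N"
    have "x \<in> {t\<in>{0<..<T}. \<psi> t > 0}" using x that by auto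
    then have "\<psi> differentiable at x \<and> deriv \<psi> x + \<rho> \<le> a0 * sqrt \<rho> + b0"
      using N1 x(2) by auto
    then show "\<psi> differentiable at x \<and> deriv \<psi> x \<le> - \<kappa>" using dbound by linarith
  qed
  have Z: "\<forall>t\<in>{a..T}. \<psi> t = 0" if a: "a \<in> {0..T}" "\<psi> a = 0" for a
  proof
    fix t1 assume t1: "t1 \<in> {a..T}"
    show "\<psi> t1 = 0"
    proof (rule ccontr)
      assume ne: "\<psi> t1 \<noteq> 0"
      have t1T: "t1 \<in> {0..T}" using t1 a by auto
      then have p1: "\<psi> t1 > 0" using nonneg ne by force
      define S where "S = {x\<in>{a..t1}. \<psi> x = 0}"
      have cS: "closed S" unfolding S_def
        using cont a t1 by (intro continuous_closed_preimage_constant) (auto intro: continuous_on_subset)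
      have aS: "a \<in> S" using a t1 by (auto simp: S_def)
      have bS: "bdd_above S" unfolding S_def by (rule bdd_aboveI[of _ t1]) auto
      define m where "m = Sup S"
      have mS: "m \<in> S" unfolding m_def using cS aS bS closed_contains_Sup by blast
      then have m1: "a \<le> m" "m \<le> t1" "\<psi> m = 0" by (auto simp: S_def)
      have pos: "\<forall>x\<in>{m<..<t1}. \<psi> x > 0"
      proof
        fix x assume x: "x \<in> {m<..<t1}"
        have "x \<notin> S" using x cSup_upper[OF _ bS, of x] by (auto simp: m_def)
        then have "\<psi> x \<noteq> 0" using x m1 by (auto simp: S_def)
        moreover have "\<psi> x \<ge> 0" using nonneg x m1 a t1 by auto
        ultimately show "\<psi> x > 0" by simp
      qed
      have "m \<noteq> t1" using m1 ne by auto
      then have "m < t1" using m1 by simp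
      have "\<psi> t1 - \<psi> m \<le> -\<kappa> * (t1 - m)" using key[of m t1] m1 a t1 pos by auto
      moreover have "\<kappa> * (t1 - m) > 0" using \<kappa>pos \<open>m < t1\<close> by simp
      ultimately show False using p1 m1 by linarith
    qed
  qed
  have part1: "\<psi>0 = 0 \<longrightarrow> (\<forall>t\<in>{0..T}. \<psi> t = 0)"
    using Z[of 0] T_pos init by auto
  have part2: "\<exists>Ts. 0 < Ts \<and> Ts < T \<and> Ts \<le> 2 * \<psi>0 / (\<rho> - a0^2 - 2 * b0) \<and>
              (\<forall>s t. 0 < s \<and> s < t \<and> t < Ts \<longrightarrow> \<psi> t < \<psi> s) \<and>
              (\<forall>t\<in>{Ts..T}. \<psi> t = 0)" if p0: "\<psi>0 > 0"
  proof -
    define Z0 where "Z0 = {x\<in>{0..T}. \<psi> x = 0}"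
    have cZ: "closed Z0" unfolding Z0_def using cont by (intro continuous_closed_preimage_constant) auto
    have bZ: "bdd_below Z0" unfolding Z0_def by (rule bdd_belowI[of _ 0]) auto
    have neZ: "Z0 \<noteq> {}"
    proof
      assume e: "Z0 = {}"
      have allpos: "\<forall>x\<in>{0..T}. \<psi> x > 0"
      proof
        fix x assume x: "x \<in> {0..T}"
        then have "\<psi> x \<noteq> 0" using e by (auto simp: Z0_def)
        then show "\<psi> x > 0" using nonneg x by force
      qed
      have "\<psi> T - \<psi> 0 \<le> -\<kappa> * (T - 0)" using key[of 0 T] T_pos allpos by auto
      moreover have "\<psi> T > 0" using allpos T_pos by auto
      ultimately show False using \<kappa>T2 init by (simp add: algebra_simps)
    qed
    define Ts where "Ts = Inf Z0"
    have TsZ: "Ts \<in> Z0" unfolding Ts_def using cZ bZ neZ closed_contains_Inf by blast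
    then have Ts1: "0 \<le> Ts" "Ts \<le> T" "\<psi> Ts = 0" by (auto simp: Z0_def)
    have "Ts \<noteq> 0" using Ts1 init p0 by auto
    then have Tsp: "Ts > 0" using Ts1 by simp
    have posb: "\<psi> x > 0" if "0 \<le> x" "x < Ts" for x
    proof -
      have "x \<notin> Z0" using that cInf_lower[OF _ bZ, of x] by (auto simp: Ts_def)
      then have "\<psi> x \<noteq> 0" using that Ts1 by (auto simp: Z0_def)
      moreover have "\<psi> x \<ge> 0" using nonneg that Ts1 by auto
      ultimately show ?thesis by simp
    qed
    have "\<psi> Ts - \<psi> 0 \<le> -\<kappa> * (Ts - 0)" using key[of 0 Ts] Ts1 posb by auto
    then have kTs: "\<kappa> * Ts \<le> \<psi>0" using Ts1 init by simp
    have b1: "Ts \<le> 2 * \<psi>0 / (\<rho> - a0^2 - 2 * b0)"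
    proof -
      have "Ts \<le> \<psi>0 / \<kappa>" using kTs \<kappa>pos by (simp add: pos_le_divide_eq mult.commute)
      also have "\<psi>0 / \<kappa> = 2 * \<psi>0 / (\<rho> - a0^2 - 2 * b0)" by (simp add: \<kappa>_def)
      finally show ?thesis .
    qed
    have "\<kappa> * Ts < \<kappa> * T" using kTs \<kappa>T2 by simp
    then have b2: "Ts < T" using \<kappa>pos by simp
    have dec: "\<forall>s t. 0 < s \<and> s < t \<and> t < Ts \<longrightarrow> \<psi> t < \<psi> s"
    proof (intro allI impI)
      fix s t assume st: "0 < s \<and> s < t \<and> t < Ts"
      have "\<psi> t - \<psi> s \<le> -\<kappa> * (t - s)" using key[of s t] st Ts1 posb by auto
      moreover have "\<kappa> * (t - s) > 0" using \<kappa>pos st by simp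
      ultimately show "\<psi> t < \<psi> s" by linarith
    qed
    show ?thesis using Tsp b1 b2 dec Z[of Ts] Ts1 by auto
  qed
  show ?thesis using part1 part2 by blast
qed

end
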